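(* Let $C:\{0,1\}^n\to\{0,1\}^m$ be a $(q,\delta,\varepsilon)$ insdel LDC with a non-adaptive decoder $\mathrm{Dec}$ that always queries exactly $q$ positions. Let $\mathcal D$ be any probability distribution over subsets $D\subseteq[2m]$ such that every $D$ in its support satisfies $|D\cap[m]|\le\delta m$ and $|D|\le m$. Then for every $i\in[n]$, if $Q$ is the random query set of $\mathrm{Dec}(\cdot,m,i)$ and $D\sim\mathcal D$ is independent of it, $\Pr[Q^D\in\mathrm{Good}_i]\ge 3\varepsilon/2$.
   Context: $\mathrm{ED}(u,v)$ is the minimum number of insertions and deletions transforming $u$ into $v$. $C$ is a $(q,\delta,\varepsilon)$ insdel LDC ($\varepsilon\in(0,1/2]$) if a randomized $\mathrm{Dec}$ given oracle access to $y\in\{0,1\}^{m'}$, $m'$ and $i\in[n]$ reads at most $q$ symbols and satisfies $\Pr[\mathrm{Dec}(y,m',i)=x_i]\ge1/2+\varepsilon$ whenever $\mathrm{ED}(C(x),y)\le2\delta m$; non-adaptive means its query distribution does not depend on $y$. For $x\in\{0,1\}^n$, $C'(x)\in\{0,1\}^{2m}$ is $C(x)$ followed by $m$ independent uniform random bits. $\mathrm{Good}_i$ is the set of $Q\in\binom{[2m]}{q}$ such that some $f:\{0,1\}^q\to\{0,1\}$ has $\Pr[f(C'(x)_Q)=x_i]\ge1/2+\varepsilon/4$ over uniform $x$ and padded bits. For $D\subseteq[2m]$, $\phi_D:[2m-|D|]\to[2m]$ is $\phi_D(j)=\min\{j'\in[2m]:|[j']\setminus D|\ge j\}$ (the original position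 of the $j$-th surviving symbol after deleting positions in $D$), and for $Q=\{k_0<\dots<k_{q-1}\}\subseteq[m]$ with $|D|\le m$, $Q^D=\{\phi_D(k_0),\dots,\phi_D(k_{q-1})\}$. *)

theory Defs
  imports "HOL-Probability.Probability"
begin

text \<open>Conventions: binary strings are bool lists; positions are 1-indexed,
  so position j of y is y ! (j - 1), and [k] = {1..k}.\<close>

definition bitstrings :: "nat \<Rightarrow> bool list set" where
  "bitstrings k = {xs. length xs = k}"

definition insdel_step :: "bool list \<Rightarrow> bool list \<Rightarrow> bool" where
  "insdel_step u v \<longleftrightarrow> (\<exists>a b c. (u = a @ [c] @ b \<and> v = a @ b) \<or> (u = a @ b \<and> v = a @ [c] @ b))"

definition ED :: "bool list \<Rightarrow> bool list \<Rightarrow> nat" where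
  "ED u v = (LEAST k. (insdel_step ^^ k) u v)"

definition restr :: "bool list \<Rightarrow> nat set \<Rightarrow> bool list" where
  "restr y Q = map (\<lambda>j. y ! (j - 1)) (sorted_list_of_set Q)"

text \<open>A non-adaptive randomized decoder: Dec m' i is a distribution over pairs
  (query set Q, decision function f); on oracle y it outputs f (y_Q).
  Since the distribution of Q does not depend on y, it is non-adaptive.\<close>
type_synonym decoder = "nat \<Rightarrow> nat \<Rightarrow> (nat set \<times> (bool list \<Rightarrow> bool)) pmf"

definition dec_out :: "decoder \<Rightarrow> bool list \<Rightarrow> nat \<Rightarrow> nat \<Rightarrow> bool pmf" where
  "dec_out Dec y m' i = map_pmf (\<lambda>(Q, f). f (restr y Q)) (Dec m' i)"

definition nonadaptive_insdel_LDC ::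
  "nat \<Rightarrow> nat \<Rightarrow> (bool list \<Rightarrow> bool list) \<Rightarrow> nat \<Rightarrow> real \<Rightarrow> real \<Rightarrow> decoder \<Rightarrow> bool" where
  "nonadaptive_insdel_LDC n m C q \<delta> \<epsilon> Dec \<longleftrightarrow>
     0 < \<epsilon> \<and> \<epsilon> \<le> 1/2 \<and>
     (\<forall>x \<in> bitstrings n. C x \<in> bitstrings m) \<and>
     (\<forall>m' i. i \<in> {1..n} \<longrightarrow> (\<forall>(Q, f) \<in> set_pmf (Dec m' i). Q \<subseteq> {1..m'} \<and> card Q \<le> q)) \<and>
     (\<forall>x \<in> bitstrings n. \<forall>y. real (ED (C x) y) \<le> 2 * \<delta> * real m \<longrightarrow>
        (\<forall>i \<in> {1..n}. measure_pmf.prob (dec_out Dec y (length y) i) {x ! (i - 1)} \<ge> 1/2 + \<epsilon>))"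

definition Good :: "nat \<Rightarrow> nat \<Rightarrow> (bool list \<Rightarrow> bool list) \<Rightarrow> nat \<Rightarrow> real \<Rightarrow> nat \<Rightarrow> nat set set" where
  "Good n m C q \<epsilon> i = {Q. Q \<subseteq> {1..2*m} \<and> card Q = q \<and>
     (\<exists>f :: bool list \<Rightarrow> bool.
        measure_pmf.prob (pair_pmf (pmf_of_set (bitstrings n)) (pmf_of_set (bitstrings m)))
          {(x, r). f (restr (C x @ r) Q) = x ! (i - 1)} \<ge> 1/2 + \<epsilon>/4)}"

definition phi :: "nat \<Rightarrow> nat set \<Rightarrow> nat \<Rightarrow> nat" where
  "phi m D j = (LEAST j'. j' \<in> {1..2*m} \<and> j \<le> card ({1..j'} - D))"

definition shiftQ :: "nat \<Rightarrow> nat set \<Rightarrow> nat set \<Rightarrow> nat set" where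
  "shiftQ m D Q = phi m D ` Q"

end

theory Submission imports Defs begin
lemma L1: "measure_pmf.prob (pair_pmf A B) S = (\<integral>a. measure_pmf.prob B {b. (a,b) \<in> S} \<partial>A)"
proof -
  have "emeasure (pair_pmf A B) S = (\<integral>\<^sup>+a. emeasure B {b. (a,b) \<in> S} \<partial>A)"
    apply (simp add: pair_pmf_def)
    apply (rule nn_integral_cong)
    subgoal for x
      using nn_integral_indicator[of "{b. (x,b)\<in>S}" "measure_pmf B"] by (simp add: indicator_def)
    done
  also have "\<dots> = (\<integral>\<^sup>+a. ennreal (measure_pmf.prob B {b. (a,b) \<in> S}) \<partial>A)"
    by (simp add: measure_pmf.emeasure_eq_measure)
  also have "\<dots> = ennreal (\<integral>a. measure_pmf.prob B {b. (a,b) \<in> S} \<partial>A)"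
    by (intro nn_integral_eq_integral measure_pmf.integrable_const_bound[where B=1]) auto
  finally show ?thesis
    by (simp add: measure_pmf.emeasure_eq_measure)
qed

lemma lift_cons: "(insdel_step ^^ k) u v \<Longrightarrow> (insdel_step ^^ k) (c#u) (c#v)"
proof (induction k arbitrary: v)
  case 0 then show ?case by simp
next
  case (Suc k)
  then obtain w where "(insdel_step ^^ k) u w" "insdel_step w v" by (auto elim: relpowp_Suc_E)
  moreover have "insdel_step (c#w) (c#v)" using \<open>insdel_step w v\<close> unfolding insdel_step_def
    by (metis append_Cons)
  ultimately show ?case using Suc.IH by (meson relpowp_Suc_I)
qed

lemma subseq_steps: "subseq v u \<Longrightarrow> (insdel_step ^^ (length u - length v)) u v"
proof (induction rule: list_emb.induct)
  case (list_emb_Nil ys)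
  then show ?case
  proof (induction ys)
    case Nil then show ?case by simp
  next
    case (Cons a ys)
    have "insdel_step (a#ys) ys" unfolding insdel_step_def by (metis append.left_neutral append_Cons)
    have e: "length (a#ys) - length ([]::bool list) = Suc (length ys - length ([]::bool list))" by simp
    show ?case unfolding e by (rule relpowp_Suc_I2[OF \<open>insdel_step (a#ys) ys\<close> Cons.IH])
  qed
next
  case (list_emb_Cons xs ys y)
  have "length xs \<le> length ys" using list_emb_Cons(1) by (rule list_emb_length)
  then have e: "length (y#ys) - length xs = Suc (length ys - length xs)" by simp
  have "insdel_step (y#ys) ys" unfolding insdel_step_def by (metis append.left_neutral append_Cons)
  then show ?case unfolding e using list_emb_Cons(2) by (rule relpowp_Suc_I2)
next
  case (list_emb_Cons2 x y xs ys)
  then show ?case using lift_cons by simp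
qed

lemma append_steps: "(insdel_step ^^ length s) v (v @ s)"
proof (induction s rule: rev_induct)
  case Nil then show ?case by simp
next
  case (snoc c s)
  have st: "insdel_step (v@s) (v@s@[c])" unfolding insdel_step_def
    by (rule exI[of _ "v@s"], rule exI[of _ "[]"], rule exI[of _ c]) simp
  have "(insdel_step ^^ Suc (length s)) v (v@s@[c])" by (rule relpowp_Suc_I[OF snoc.IH st])
  then show ?case by (metis append_assoc length_append_singleton)
qed

lemma shift_sorted: "sorted_wrt (<) (js::nat list) \<Longrightarrow> (\<forall>j\<in>set js. 0 < j) \<Longrightarrow> sorted_wrt (<) (map (\<lambda>j. j - 1) js)"
  unfolding sorted_wrt_map
  by (erule sorted_wrt_mono_rel[rotated]) auto

lemma subseq_map_nth: "sorted_wrt (<) ks \<Longrightarrow> (\<forall>k\<in>set ks. k < length c) \<Longrightarrow> subseq (map (nth c) ks) c"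
proof (induction c arbitrary: ks)
  case Nil then show ?case by (cases "ks") auto
next
  case (Cons a c)
  show ?case
  proof (cases "ks")
    case Nil then show ?thesis by simp
  next
    case (Cons k js)
    have js: "\<forall>j\<in>set js. k < j" "sorted_wrt (<) js" using Cons \<open>sorted_wrt (<) ks\<close> by auto
    show ?thesis
    proof (cases "k = 0")
      case True
      have pos: "\<forall>j\<in>set js. 0 < j" using js True by auto
      have "map (nth (a#c)) ks = a # map (nth c) (map (\<lambda>j. j - 1) js)"
        using pos True Cons by (auto simp: nth_Cons')
      moreover have "subseq (map (nth c) (map (\<lambda>j. j - 1) js)) c"
      proof (rule Cons.IH)
        show "sorted_wrt (<) (map (\<lambda>j. j - 1) js)" using shift_sorted js(2) pos by blast
        show "\<forall>k\<in>set (map (\<lambda>j. j - 1) js). k < length c" using Cons.prems(2) Cons pos by fastforce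
      qed
      ultimately show ?thesis by simp
    next
      case False
      have pos: "\<forall>j\<in>set ks. 0 < j" using js False Cons by auto
      have "map (nth (a#c)) ks = map (nth c) (map (\<lambda>j. j - 1) ks)"
        unfolding map_map by (rule map_cong[OF refl]) (use pos in \<open>auto simp: nth_Cons'\<close>)
      moreover have "subseq (map (nth c) (map (\<lambda>j. j - 1) ks)) c"
      proof (rule Cons.IH)
        show "sorted_wrt (<) (map (\<lambda>j. j - 1) ks)" using shift_sorted Cons.prems(1) pos by blast
        show "\<forall>k\<in>set (map (\<lambda>j. j - 1) ks). k < length c" using Cons.prems(2) pos by fastforce
      qed
      ultimately show ?thesis by (metis list_emb_Cons)
    qed
  qed
qed

lemma LB: fixes f :: "'a \<Rightarrow> real"
  assumes "\<And>x. x \<in> set_pmf M \<Longrightarrow> a \<le> f x" "\<And>x. \<bar>f x\<bar> \<le> B"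
  shows "a \<le> measure_pmf.expectation M f"
proof -
  have "measure_pmf.expectation M (\<lambda>_. a) \<le> measure_pmf.expectation M f"
    by (rule integral_mono_AE) (auto intro!: measure_pmf.integrable_const_bound[where B=B] AE_pmfI assms)
  then show ?thesis by simp
qed

lemma UB: fixes f g :: "'a \<Rightarrow> real"
  assumes "\<And>x. x \<in> set_pmf M \<Longrightarrow> f x \<le> g x" "\<And>x. \<bar>f x\<bar> \<le> B" "\<And>x. \<bar>g x\<bar> \<le> B"
  shows "measure_pmf.expectation M f \<le> measure_pmf.expectation M g"
  by (rule integral_mono_AE) (auto intro!: measure_pmf.integrable_const_bound[where B=B] AE_pmfI assms)

locale phictx =
  fixes m :: nat and D :: "nat set"
  assumes Dsub: "D \<subseteq> {1..2*m}" and Dcard: "card D \<le> m"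
begin

definition cnt where "cnt k = card ({1..k} - D)"

lemma cnt_mono: "a \<le> b \<Longrightarrow> cnt a \<le> cnt b"
  unfolding cnt_def by (rule card_mono) auto

lemma cnt_Suc: "cnt (Suc k) \<le> Suc (cnt k)"
proof -
  have "{1..Suc k} - D \<subseteq> insert (Suc k) ({1..k} - D)" by auto
  then have "cnt (Suc k) \<le> card (insert (Suc k) ({1..k} - D))" unfolding cnt_def
    by (intro card_mono) auto
  also have "\<dots> \<le> Suc (cnt k)" unfolding cnt_def by (simp add: card_insert_if)
  finally show ?thesis .
qed

lemma cnt_top: "m \<le> cnt (2*m)"
proof -
  have "finite D" using Dsub finite_subset by blast
  then have "cnt (2*m) = 2*m - card D" unfolding cnt_def using Dsub by (simp add: card_Diff_subset)
  then show ?thesis using Dcard by simp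
qed

lemma phi_eq: "phi m D j = (LEAST j'. j' \<in> {1..2*m} \<and> j \<le> cnt j')"
  unfolding phi_def cnt_def ..

lemma phi_props: assumes "1 \<le> j" "j \<le> m" shows "phi m D j \<in> {1..2*m} \<and> j \<le> cnt (phi m D j)"
  unfolding phi_eq
  by (rule LeastI[of _ "2*m"]) (use assms cnt_top in auto)

lemma phi_le: assumes "j \<le> cnt k" "k \<in> {1..2*m}" shows "phi m D j \<le> k"
  unfolding phi_eq by (rule Least_le) (use assms in auto)

lemma phi_step: assumes "1 \<le> j" "j < m" shows "phi m D j < phi m D (Suc j)"
proof (rule ccontr)
  assume "\<not> ?thesis"
  then have le: "phi m D (Suc j) \<le> phi m D j" by simp
  let ?p = "phi m D j"
  have p: "?p \<in> {1..2*m}" "j \<le> cnt ?p" using phi_props assms by auto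
  have "Suc j \<le> cnt (phi m D (Suc j))" using phi_props assms by auto
  also have "\<dots> \<le> cnt ?p" using cnt_mono le by blast
  finally have sj: "Suc j \<le> cnt ?p" .
  show False
  proof (cases "?p = 1")
    case True
    have "cnt 1 \<le> 1" using cnt_Suc[of 0] by (simp add: cnt_def)
    then show False using sj True assms by simp
  next
    case False
    then have "?p - 1 \<in> {1..2*m}" using p by auto
    moreover have "j \<le> cnt (?p - 1)" using cnt_Suc[of "?p - 1"] sj False p by simp
    ultimately have "?p \<le> ?p - 1" using phi_le by blast
    then show False using p(1) by auto
  qed
qed

lemma phi_mono: assumes "1 \<le> a" "a < b" "b \<le> m" shows "phi m D a < phi m D b"
  using assms
proof (induction b)
  case 0 then show ?case by simp
next
  case (Suc b)
  show ?case
  proof (cases "a = b")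
    case True then show ?thesis using phi_step[of b] Suc.prems by simp
  next
    case False
    then have "a < b" using Suc.prems by simp
    then have "phi m D a < phi m D b" using Suc.IH Suc.prems by simp
    also have "\<dots> < phi m D (Suc b)" using phi_step[of b] Suc.prems False by simp
    finally show ?thesis .
  qed
qed

lemma phi_inj: "inj_on (phi m D) {1..m}"
proof (rule inj_onI)
  fix a b assume ab: "a \<in> {1..m}" "b \<in> {1..m}" "phi m D a = phi m D b"
  show "a = b"
  proof (rule ccontr)
    assume "a \<noteq> b"
    then have "a < b \<or> b < a" by arith
    then show False
    proof
      assume "a < b" then have "phi m D a < phi m D b" using ab by (intro phi_mono) auto
      then show False using ab by simp
    next
      assume "b < a" then have "phi m D b < phi m D a" using ab by (intro phi_mono) auto
      then show False using ab by simp
    qed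
  qed
qed

definition ymap :: "bool list \<Rightarrow> bool list" where
  "ymap w = map (\<lambda>j. w ! (phi m D j - 1)) [1..<m+1]"

lemma length_ymap[simp]: "length (ymap w) = m"
  unfolding ymap_def by simp

end

context phictx begin
lemma restr_ymap: assumes "Q \<subseteq> {1..m}"
  shows "restr (ymap w) Q = restr w (shiftQ m D Q)"
proof -
  have fin: "finite Q" using assms finite_subset by blast
  let ?L = "sorted_list_of_set Q"
  have setL: "set ?L = Q" using fin by simp
  have sw: "sorted_wrt (<) (map (phi m D) ?L)"
    unfolding sorted_wrt_map
  proof (rule sorted_wrt_mono_rel[OF _ strict_sorted_list_of_set])
    fix x y assume "x \<in> set ?L" "y \<in> set ?L" "x < y"
    then have "1 \<le> x" "y \<le> m" using setL assms by auto
    then show "phi m D x < phi m D y" using phi_mono \<open>x < y\<close> by blast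
  qed
  have "sorted_list_of_set (phi m D ` Q) = map (phi m D) ?L"
  proof -
    have e: "phi m D ` Q = set (map (phi m D) ?L)" using setL by simp
    have "sorted (map (phi m D) ?L)" "distinct (map (phi m D) ?L)" using sw strict_sorted_iff by auto
    then have "sorted_list_of_set (set (map (phi m D) ?L)) = map (phi m D) ?L"
      by (simp only: sorted_list_of_set_sort_remdups distinct_remdups_id sorted_sort_id)
    then show ?thesis unfolding e .
  qed
  then have "restr w (shiftQ m D Q) = map (\<lambda>k. w ! (phi m D k - 1)) ?L"
    unfolding restr_def shiftQ_def by simp
  also have "\<dots> = restr (ymap w) Q"
    unfolding restr_def ymap_def
  proof (intro map_cong refl)
    fix k assume "k \<in> set ?L"
    then have k: "1 \<le> k" "k \<le> m" using setL assms by auto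
    then have "[1..<m+1] ! (k - 1) = k" by (subst nth_upt) auto
    then show "w ! (phi m D k - 1) = map (\<lambda>j. w ! (phi m D j - 1)) [1..<m+1] ! (k - 1)"
      using k by (simp del: upt_Suc)
  qed
  finally show ?thesis by simp
qed

lemma shiftQ_props: assumes "Q \<subseteq> {1..m}"
  shows "shiftQ m D Q \<subseteq> {1..2*m}" "card (shiftQ m D Q) = card Q"
proof -
  show "shiftQ m D Q \<subseteq> {1..2*m}" unfolding shiftQ_def
  proof
    fix x assume "x \<in> phi m D ` Q"
    then obtain j where "j \<in> Q" "x = phi m D j" by blast
    then show "x \<in> {1..2*m}" using assms phi_props[of j] by auto
  qed
  show "card (shiftQ m D Q) = card Q" unfolding shiftQ_def
    using card_image inj_on_subset[OF phi_inj assms] by blast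
qed

lemma ED_ymap: assumes "length c = m"
  shows "ED c (ymap (c @ r)) \<le> 2 * card (D \<inter> {1..m})"
proof -
  let ?t = "cnt m"
  let ?y = "ymap (c @ r)"
  have tm: "?t \<le> m" unfolding cnt_def
  proof -
    have "card ({1..m} - D) \<le> card {1..m}" by (rule card_mono) auto
    then show "card ({1..m} - D) \<le> m" by simp
  qed
  have dt: "m - ?t = card (D \<inter> {1..m})"
  proof -
    have "?t = m - card ({1..m} \<inter> D)" unfolding cnt_def by (simp add: card_Diff_subset_Int)
    moreover have "card ({1..m} \<inter> D) \<le> card {1..m}" by (rule card_mono) auto
    ultimately show ?thesis by (simp add: Int_commute)
  qed
  have phis: "\<And>j. j \<in> {1..?t} \<Longrightarrow> 1 \<le> phi m D j \<and> phi m D j \<le> m"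
  proof -
    fix j assume j: "j \<in> {1..?t}"
    then have "1 \<le> m" using tm by auto
    then show "1 \<le> phi m D j \<and> phi m D j \<le> m"
      using phi_props[of j] phi_le[of j m] j tm by auto
  qed
  have take_eq: "take ?t ?y = map (nth c) (map (\<lambda>j. phi m D j - 1) [1..<?t+1])"
    unfolding ymap_def take_map map_map
  proof (intro map_cong)
    have "1 + ?t \<le> m+1" using tm by simp
    from take_upt[OF this] show "take ?t [1..<m+1] = [1..<?t+1]" by (simp only: add.commute)
  next
    fix j assume "j \<in> set [1..<?t+1]"
    then have "1 \<le> phi m D j \<and> phi m D j \<le> m" using phis by auto
    then show "(c @ r) ! (phi m D j - 1) = (((!) c) \<circ> (\<lambda>j. phi m D j - 1)) j"
      using assms by (auto simp: nth_append)
  qed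
  have "subseq (take ?t ?y) c"
    unfolding take_eq
  proof (rule subseq_map_nth)
    show "sorted_wrt (<) (map (\<lambda>j. phi m D j - 1) [1..<?t+1])"
      unfolding sorted_wrt_map
    proof (rule sorted_wrt_mono_rel[OF _ sorted_wrt_upt])
      fix x y assume xy: "x \<in> set [1..<?t+1]" "y \<in> set [1..<?t+1]" "x < y"
      then have "1 \<le> x" "y \<le> m" using tm by auto
      then have "phi m D x < phi m D y" using phi_mono \<open>x < y\<close> by blast
      moreover have "1 \<le> phi m D x" using phis xy by auto
      ultimately show "phi m D x - 1 < phi m D y - 1" by arith
    qed
    show "\<forall>k\<in>set (map (\<lambda>j. phi m D j - 1) [1..<?t+1]). k < length c"
    proof
      fix k assume "k \<in> set (map (\<lambda>j. phi m D j - 1) [1..<?t+1])"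
      then obtain j where j: "j \<in> set [1..<?t+1]" "k = phi m D j - 1" by (auto simp del: upt_Suc)
      then have "j \<in> {1..?t}" by auto
      then show "k < length c" using phis[of j] assms j by auto
    qed
  qed
  then have s1: "(insdel_step ^^ (m - ?t)) c (take ?t ?y)"
    using subseq_steps[of "take ?t ?y" c] tm assms by simp
  have s2: "(insdel_step ^^ (m - ?t)) (take ?t ?y) ?y"
    using append_steps[of "drop ?t ?y" "take ?t ?y"] by simp
  have "(insdel_step ^^ ((m - ?t) + (m - ?t))) c ?y"
    unfolding relpowp_add using s1 s2 by blast
  then have "ED c ?y \<le> (m - ?t) + (m - ?t)" unfolding ED_def by (rule Least_le)
  then show ?thesis using dt by simp
qed

end


lemma bits_fin: "finite (bitstrings k)"
proof -
  have "bitstrings k = {xs. set xs \<subseteq> (UNIV::bool set) \<and> length xs = k}" unfolding bitstrings_def by auto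
  then show ?thesis using finite_lists_length_eq[of "UNIV::bool set" k] by simp
qed

lemma bits_ne: "bitstrings k \<noteq> {}"
  unfolding bitstrings_def by (metis (mono_tags) empty_iff length_replicate mem_Collect_eq)

theorem mainTheorem11:
  fixes n m q :: nat and \<delta> \<epsilon> :: real
    and C :: "bool list \<Rightarrow> bool list" and Dec :: decoder
    and \<D> :: "nat set pmf"
  assumes LDC: "nonadaptive_insdel_LDC n m C q \<delta> \<epsilon> Dec"
    and exact_q: "\<forall>i \<in> {1..n}. \<forall>(Q, f) \<in> set_pmf (Dec m i). card Q = q"
    and supp: "\<forall>D \<in> set_pmf \<D>. D \<subseteq> {1..2*m} \<and>
                 real (card (D \<inter> {1..m})) \<le> \<delta> * real m \<and> card D \<le> m"
    and i: "i \<in> {1..n}"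
  shows "measure_pmf.prob (pair_pmf (Dec m i) \<D>)
           {((Q, f), D). shiftQ m D Q \<in> Good n m C q \<epsilon> i} \<ge> 3 * \<epsilon> / 2"
proof -
  define X where "X = pmf_of_set (bitstrings n)"
  define R where "R = pmf_of_set (bitstrings m)"
  define Dc where "Dc = Dec m i"
  define P where "P = pair_pmf Dc \<D>"
  define XR where "XR = pair_pmf X R"
  define E :: "(((nat set \<times> (bool list \<Rightarrow> bool)) \<times> nat set) \<times> (bool list \<times> bool list)) set"
    where "E = {(((Q,f),D),(x,r)). f (restr (C x @ r) (shiftQ m D Q)) = x ! (i - 1)}"
  define G :: "((nat set \<times> (bool list \<Rightarrow> bool)) \<times> nat set) set"
    where "G = {((Q, f), D). shiftQ m D Q \<in> Good n m C q \<epsilon> i}"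
  define c where "c = 1/2 + \<epsilon>/4"
  have eps: "0 < \<epsilon>" "\<epsilon> \<le> 1/2" using LDC unfolding nonadaptive_insdel_LDC_def by auto
  have Cm: "\<And>x. x \<in> bitstrings n \<Longrightarrow> length (C x) = m"
    using LDC unfolding nonadaptive_insdel_LDC_def bitstrings_def by auto
  have qry: "\<And>Q f. (Q, f) \<in> set_pmf Dc \<Longrightarrow> Q \<subseteq> {1..m} \<and> card Q = q"
  proof -
    fix Q f assume a: "(Q, f) \<in> set_pmf Dc"
    have "\<forall>(Q, f) \<in> set_pmf (Dec m i). Q \<subseteq> {1..m} \<and> card Q \<le> q"
      using LDC i unfolding nonadaptive_insdel_LDC_def by blast
    then show "Q \<subseteq> {1..m} \<and> card Q = q" using a exact_q i unfolding Dc_def by fastforce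
  qed
  have corr: "\<And>x y. x \<in> bitstrings n \<Longrightarrow> real (ED (C x) y) \<le> 2 * \<delta> * real m \<Longrightarrow>
      measure_pmf.prob (dec_out Dec y (length y) i) {x ! (i - 1)} \<ge> 1/2 + \<epsilon>"
    using LDC i unfolding nonadaptive_insdel_LDC_def by blast
  have setX: "set_pmf X = bitstrings n" unfolding X_def using bits_fin bits_ne by simp
  have setR: "set_pmf R = bitstrings m" unfolding R_def using bits_fin bits_ne by simp

  have up: "measure_pmf.prob (pair_pmf P XR) E \<le> c + (1 - c) * measure_pmf.prob P G"
  proof -
    have "measure_pmf.prob (pair_pmf P XR) E = (\<integral>z. measure_pmf.prob XR {xr. (z,xr) \<in> E} \<partial>P)"
      by (rule L1)
    also have "\<dots> \<le> (\<integral>z. c + (1-c) * indicator G z \<partial>P)"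
    proof (rule UB[where B=2])
      fix z assume z: "z \<in> set_pmf P"
      obtain Q f D where zz: "z = ((Q,f),D)" by (metis prod.exhaust)
      with z have QD: "(Q,f) \<in> set_pmf Dc" "D \<in> set_pmf \<D>" by (auto simp: P_def)
      have Qs: "Q \<subseteq> {1..m}" and cq: "card Q = q" using qry[OF QD(1)] by auto
      interpret phictx m D using supp QD(2) by unfold_locales auto
      show "measure_pmf.prob XR {xr. (z,xr) \<in> E} \<le> c + (1-c) * indicator G z"
      proof (cases "z \<in> G")
        case True then show ?thesis by simp
      next
        case False
        then have "shiftQ m D Q \<notin> Good n m C q \<epsilon> i" by (simp add: G_def zz)
        then have "\<not> (measure_pmf.prob XR {(x,r). f (restr (C x @ r) (shiftQ m D Q)) = x ! (i - 1)} \<ge> c)"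
          using shiftQ_props[OF Qs] cq unfolding Good_def c_def XR_def X_def R_def by auto
        moreover have "{xr. (z,xr) \<in> E} = {(x,r). f (restr (C x @ r) (shiftQ m D Q)) = x ! (i - 1)}"
          by (auto simp: E_def zz)
        ultimately show ?thesis using False by simp
      qed
    next
      fix z have a: "measure_pmf.prob XR {xr. (z,xr) \<in> E} \<le> 1" by (rule measure_pmf.prob_le_1)
      have b: "0 \<le> measure_pmf.prob XR {xr. (z,xr) \<in> E}" by (rule measure_nonneg)
      show "\<bar>measure_pmf.prob XR {xr. (z,xr) \<in> E}\<bar> \<le> 2"
        by (subst abs_of_nonneg[OF b]) (use a in linarith)
    next
      fix z show "\<bar>c + (1-c) * indicator G z\<bar> \<le> 2" using eps unfolding c_def indicator_def by auto
    qed
    also have "(\<integral>z. c + (1-c) * indicator G z \<partial>P) = c + (1 - c) * measure_pmf.prob P G"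
    proof -
      have "(\<integral>z. c + (1-c) * indicator G z \<partial>P) = (\<integral>z. c \<partial>P) + (\<integral>z. (1-c) * indicator G z \<partial>P)"
      proof (rule Bochner_Integration.integral_add)
        show "integrable (measure_pmf P) (\<lambda>z. c)"
          by (rule measure_pmf.integrable_const_bound[where B="\<bar>c\<bar>"]) auto
        have "\<And>z. norm ((1-c) * indicator G z) \<le> \<bar>1-c\<bar>"
          by (simp add: indicator_def abs_mult)
        then show "integrable (measure_pmf P) (\<lambda>z. (1-c) * indicator G z)"
          by (intro measure_pmf.integrable_const_bound[where B="\<bar>1-c\<bar>"]) auto
      qed
      then show ?thesis by simp
    qed
    finally show ?thesis .
  qed

  have low: "1/2 + \<epsilon> \<le> measure_pmf.prob (pair_pmf P XR) E"
  proof -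
    have "measure_pmf.prob (pair_pmf P XR) E = measure_pmf.prob (pair_pmf XR P) ((\<lambda>(x,y). (y,x)) -` E)"
      by (subst pair_commute_pmf) simp
    also have "\<dots> = (\<integral>xr. measure_pmf.prob P {z. (xr,z) \<in> (\<lambda>(x,y). (y,x)) -` E} \<partial>XR)"
      by (rule L1)
    finally have eq: "measure_pmf.prob (pair_pmf P XR) E = (\<integral>xr. measure_pmf.prob P {z. (z,xr) \<in> E} \<partial>XR)"
      by simp
    have "1/2 + \<epsilon> \<le> (\<integral>xr. measure_pmf.prob P {z. (z,xr) \<in> E} \<partial>XR)"
    proof (rule LB[where B=1])
      fix xr assume xr: "xr \<in> set_pmf XR"
      obtain x r where xr': "xr = (x,r)" by (metis prod.exhaust)
      have x: "x \<in> bitstrings n" and r: "r \<in> bitstrings m" using xr xr' setX setR by (auto simp: XR_def)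
      have "measure_pmf.prob P {z. (z,xr) \<in> E} =
            measure_pmf.prob (pair_pmf \<D> Dc) ((\<lambda>(x,y). (y,x)) -` {z. (z,xr) \<in> E})"
        unfolding P_def by (subst pair_commute_pmf) simp
      also have "\<dots> = (\<integral>D. measure_pmf.prob Dc {Qf. (D,Qf) \<in> (\<lambda>(x,y). (y,x)) -` {z. (z,xr) \<in> E}} \<partial>\<D>)"
        by (rule L1)
      finally have eq2: "measure_pmf.prob P {z. (z,xr) \<in> E} = (\<integral>D. measure_pmf.prob Dc {Qf. ((Qf,D),xr) \<in> E} \<partial>\<D>)"
        by simp
      have "1/2 + \<epsilon> \<le> (\<integral>D. measure_pmf.prob Dc {Qf. ((Qf,D),xr) \<in> E} \<partial>\<D>)"
      proof (rule LB[where B=1])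
        fix D assume D: "D \<in> set_pmf \<D>"
        interpret phictx m D using supp D by unfold_locales auto
        let ?y = "ymap (C x @ r)"
        have "real (ED (C x) ?y) \<le> real (2 * card (D \<inter> {1..m}))"
          using ED_ymap[OF Cm[OF x], of r] by (simp only: of_nat_le_iff)
        also have "\<dots> \<le> 2 * \<delta> * real m" using supp D by auto
        finally have "measure_pmf.prob (dec_out Dec ?y (length ?y) i) {x ! (i - 1)} \<ge> 1/2 + \<epsilon>"
          using corr[OF x] by blast
        then have "1/2 + \<epsilon> \<le> measure_pmf.prob Dc ((\<lambda>(Q, f). f (restr ?y Q)) -` {x ! (i - 1)})"
          by (simp add: dec_out_def Dc_def)
        also have "\<dots> = measure_pmf.prob Dc (((\<lambda>(Q, f). f (restr ?y Q)) -` {x ! (i - 1)}) \<inter> set_pmf Dc)"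
          by (simp add: measure_Int_set_pmf)
        also have "((\<lambda>(Q, f). f (restr ?y Q)) -` {x ! (i - 1)}) \<inter> set_pmf Dc =
                   {Qf. ((Qf,D),xr) \<in> E} \<inter> set_pmf Dc"
        proof (intro set_eqI iffI)
          fix Qf assume "Qf \<in> ((\<lambda>(Q, f). f (restr ?y Q)) -` {x ! (i - 1)}) \<inter> set_pmf Dc"
          moreover obtain Q f where "Qf = (Q,f)" by (metis prod.exhaust)
          ultimately show "Qf \<in> {Qf. ((Qf,D),xr) \<in> E} \<inter> set_pmf Dc"
            using qry restr_ymap by (auto simp: E_def xr')
        next
          fix Qf assume "Qf \<in> {Qf. ((Qf,D),xr) \<in> E} \<inter> set_pmf Dc"
          moreover obtain Q f where "Qf = (Q,f)" by (metis prod.exhaust)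
          ultimately show "Qf \<in> ((\<lambda>(Q, f). f (restr ?y Q)) -` {x ! (i - 1)}) \<inter> set_pmf Dc"
            using qry restr_ymap by (auto simp: E_def xr')
        qed
        also have "measure_pmf.prob Dc ({Qf. ((Qf,D),xr) \<in> E} \<inter> set_pmf Dc) = measure_pmf.prob Dc {Qf. ((Qf,D),xr) \<in> E}"
          by (simp add: measure_Int_set_pmf)
        finally show "1/2 + \<epsilon> \<le> measure_pmf.prob Dc {Qf. ((Qf,D),xr) \<in> E}" .
      next
        fix D show "\<bar>measure_pmf.prob Dc {Qf. ((Qf,D),xr) \<in> E}\<bar> \<le> 1" by simp
      qed
      then show "1/2 + \<epsilon> \<le> measure_pmf.prob P {z. (z,xr) \<in> E}" using eq2 by simp
    next
      fix xr show "\<bar>measure_pmf.prob P {z. (z,xr) \<in> E}\<bar> \<le> 1" by simp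
    qed
    then show ?thesis using eq by simp
  qed

  define g where "g = measure_pmf.prob P G"
  have g0: "0 \<le> g" unfolding g_def by simp
  have key: "1/2 + \<epsilon> \<le> c + (1 - c) * g" using up low unfolding g_def by linarith
  have "3 * \<epsilon> / 4 \<le> (1/2 - \<epsilon>/4) * g" using key unfolding c_def by (simp add: algebra_simps)
  also have "\<dots> \<le> g / 2" using eps g0 by (simp add: algebra_simps)
  finally have "3 * \<epsilon> / 2 \<le> g" by simp
  then show ?thesis unfolding g_def P_def Dc_def G_def .
qed

end
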